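(* Suppose outcomes are observed under a balanced $K$-cluster randomized design $\mathcal{D}(\mathcal{C})$ and the potential outcomes have the form $Y_i(\mathbf{Z})=g_i(Z_i,e_i(\mathbf{Z}))$, where for each $i$ and each $Z\in\{-1,1\}$ the function $e\mapsto g_i(Z,e)$ is $L$-Lipschitz on $[-1,1]$ (with $L>0$). Then $$\left|\mathbb{E}[\widehat\tau_{DIM}]-\tau^*\right|\le \frac{2}{N}\cdot\frac{K}{K-1}\,L\,\mathcal{H}(\mathcal{C}),$$ where $\tau^*=\frac1N\sum_{i}\big(g_i(1,1)-g_i(-1,-1)\big)$. Furthermore, this bound is attained (by $g_i(Z,e)=Le$ for all $i$), and consequently, among all partitions of $[N]$ into $K$ equally sized clusters (with $K,K_T$ fixed), the set of minimizers of $\max_{\{g_i\}}\left|\mathbb{E}[\widehat\tau_{DIM}]-\tau^*\right|$, the maximum taken over all families $\{g_i\}$ of functions that are $L$-Lipschitz in $e$, equals the set of minimizers of $\mathcal{H}(\mathcal{C})$.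
   Context: Setting: $N$ experimental units $[N]$, $M$ interference units $[M]$, weights $w_{is}\ge0$ with $\sum_s w_{is}>0$ for all $i$ and $\sum_i w_{is}>0$ for all $s$. For $\mathbf{Z}\in\{-1,1\}^N$: dose $d_s=\frac{\sum_i w_{is}Z_i}{\sum_i w_{is}}$, exposure $e_i(\mathbf{Z})=\frac{\sum_s w_{is}d_s}{\sum_s w_{is}}\in[-1,1]$. Balanced $K$-cluster randomized design $\mathcal{D}(\mathcal{C})$: $K\ge2$ divides $N$, $\mathcal{C}$ partitions $[N]$ into $K$ clusters of size $N/K$, $\mathcal{C}(i)$ is the cluster of $i$; $K_T$ clusters ($0<K_T<K$) chosen uniformly at random are treated ($Z_i=1$), the rest are control ($Z_i=-1$). $N_T=NK_T/K$, $N_C=N-N_T$; $\widehat\tau_{DIM}=\frac{1}{N_T}\sum_{i:Z_i=1}Y_i-\frac{1}{N_C}\sum_{i:Z_i=-1}Y_i$. $\mathcal{H}(\mathcal{C})=\sum_{i\in[N]}\sum_{j\in[N]\setminus\mathcal{C}(i)}\sum_{s\in[M]}\frac{w_{is}}{\sum_{s'} w_{is'}}\frac{w_{js}}{\sum_{k} w_{ks}}$. *)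

theory Defs
  imports "HOL-Analysis.Analysis" "HOL-Library.Disjoint_Sets"
begin

text \<open>Experimental units are 0..<N, interference units 0..<M; weights w i s.
  Treatment vectors Z :: nat \<Rightarrow> real take values in {-1,1}.\<close>

definition dose :: "(nat \<Rightarrow> nat \<Rightarrow> real) \<Rightarrow> nat \<Rightarrow> (nat \<Rightarrow> real) \<Rightarrow> nat \<Rightarrow> real" where
  "dose w N Z s = (\<Sum>i<N. w i s * Z i) / (\<Sum>i<N. w i s)"

definition exposure :: "(nat \<Rightarrow> nat \<Rightarrow> real) \<Rightarrow> nat \<Rightarrow> nat \<Rightarrow> (nat \<Rightarrow> real) \<Rightarrow> nat \<Rightarrow> real" where
  "exposure w N M Z i = (\<Sum>s<M. w i s * dose w N Z s) / (\<Sum>s<M. w i s)"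

definition balanced_partition :: "nat \<Rightarrow> nat \<Rightarrow> nat set set \<Rightarrow> bool" where
  "balanced_partition N K C \<longleftrightarrow>
     partition_on {0..<N} C \<and> card C = K \<and> (\<forall>B\<in>C. card B = N div K)"

definition cluster_of :: "nat set set \<Rightarrow> nat \<Rightarrow> nat set" where
  "cluster_of C i = (THE B. B \<in> C \<and> i \<in> B)"

definition assign :: "nat set set \<Rightarrow> nat \<Rightarrow> real" where
  "assign T i = (if i \<in> \<Union>T then 1 else -1)"

definition dim_est :: "nat \<Rightarrow> nat \<Rightarrow> nat \<Rightarrow> (nat \<Rightarrow> real) \<Rightarrow> (nat \<Rightarrow> real) \<Rightarrow> real" where
  "dim_est N K KT Z Y =
     (let NT = real N * real KT / real K; NC = real N - NT in
       (\<Sum>i\<in>{i. i < N \<and> Z i = 1}. Y i) / NT - (\<Sum>i\<in>{i. i < N \<and> Z i = -1}. Y i) / NC)"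

definition outcomes :: "(nat \<Rightarrow> nat \<Rightarrow> real) \<Rightarrow> nat \<Rightarrow> nat \<Rightarrow> (nat \<Rightarrow> real \<Rightarrow> real \<Rightarrow> real)
     \<Rightarrow> (nat \<Rightarrow> real) \<Rightarrow> nat \<Rightarrow> real" where
  "outcomes w N M g Z i = g i (Z i) (exposure w N M Z i)"

definition expected_dim ::
  "(nat \<Rightarrow> nat \<Rightarrow> real) \<Rightarrow> nat \<Rightarrow> nat \<Rightarrow> nat \<Rightarrow> nat \<Rightarrow> nat set set
     \<Rightarrow> (nat \<Rightarrow> real \<Rightarrow> real \<Rightarrow> real) \<Rightarrow> real" where
  "expected_dim w N M K KT C g =
     (\<Sum>T\<in>{T. T \<subseteq> C \<and> card T = KT}. dim_est N K KT (assign T) (outcomes w N M g (assign T)))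
       / real (card {T. T \<subseteq> C \<and> card T = KT})"

definition tau_star :: "nat \<Rightarrow> (nat \<Rightarrow> real \<Rightarrow> real \<Rightarrow> real) \<Rightarrow> real" where
  "tau_star N g = (1 / real N) * (\<Sum>i<N. g i 1 1 - g i (-1) (-1))"

definition bias ::
  "(nat \<Rightarrow> nat \<Rightarrow> real) \<Rightarrow> nat \<Rightarrow> nat \<Rightarrow> nat \<Rightarrow> nat \<Rightarrow> nat set set
     \<Rightarrow> (nat \<Rightarrow> real \<Rightarrow> real \<Rightarrow> real) \<Rightarrow> real" where
  "bias w N M K KT C g = \<bar>expected_dim w N M K KT C g - tau_star N g\<bar>"

definition lip_family :: "nat \<Rightarrow> real \<Rightarrow> (nat \<Rightarrow> real \<Rightarrow> real \<Rightarrow> real) \<Rightarrow> bool" where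
  "lip_family N L g \<longleftrightarrow> (\<forall>i<N. \<forall>z\<in>{-1, 1}. L-lipschitz_on {-1..1} (g i z))"

definition worst_bias ::
  "(nat \<Rightarrow> nat \<Rightarrow> real) \<Rightarrow> nat \<Rightarrow> nat \<Rightarrow> nat \<Rightarrow> nat \<Rightarrow> real \<Rightarrow> nat set set \<Rightarrow> real" where
  "worst_bias w N M K KT L C = (SUP g\<in>{g. lip_family N L g}. bias w N M K KT C g)"

definition H :: "(nat \<Rightarrow> nat \<Rightarrow> real) \<Rightarrow> nat \<Rightarrow> nat \<Rightarrow> nat set set \<Rightarrow> real" where
  "H w N M C = (\<Sum>i<N. \<Sum>j\<in>{0..<N} - cluster_of C i. \<Sum>s<M.
       (w i s / (\<Sum>s'<M. w i s')) * (w j s / (\<Sum>k<N. w k s)))"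

end

theory Submission
  imports Defs
begin


lemma card_subsets_with:
  assumes "finite C" "B \<in> C" "1 \<le> k"
  shows "card {T. T \<subseteq> C \<and> card T = k \<and> B \<in> T} = (card C - 1) choose (k - 1)"
proof -
  have eq: "{T. T \<subseteq> C \<and> card T = k \<and> B \<in> T} = insert B ` {U. U \<subseteq> C - {B} \<and> card U = k - 1}"
  proof (rule set_eqI, rule iffI)
    fix T assume "T \<in> {T. T \<subseteq> C \<and> card T = k \<and> B \<in> T}"
    hence T: "T \<subseteq> C" "card T = k" "B \<in> T" by auto
    have "finite T" using T(1) assms(1) finite_subset by blast
    hence "card (T - {B}) = k - 1" using T by simp
    moreover have "T = insert B (T - {B})" using T by auto
    ultimately show "T \<in> insert B ` {U. U \<subseteq> C - {B} \<and> card U = k - 1}" using T by blast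
  next
    fix T assume "T \<in> insert B ` {U. U \<subseteq> C - {B} \<and> card U = k - 1}"
    then obtain U where U: "U \<subseteq> C - {B}" "card U = k - 1" "T = insert B U" by blast
    have "finite U" using U(1) assms(1) finite_subset by blast
    have "B \<notin> U" using U(1) by blast
    hence "card T = k" using U assms(3) \<open>finite U\<close> by auto
    thus "T \<in> {T. T \<subseteq> C \<and> card T = k \<and> B \<in> T}" using U assms(2) by auto
  qed
  have inj: "inj_on (insert B) {U. U \<subseteq> C - {B} \<and> card U = k - 1}"
    by (rule inj_onI) (metis Diff_insert_absorb insert_subset mem_Collect_eq subset_Diff_insert)
  have "card {T. T \<subseteq> C \<and> card T = k \<and> B \<in> T} = card {U. U \<subseteq> C - {B} \<and> card U = k - 1}"
    unfolding eq by (rule card_image[OF inj])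
  also have "\<dots> = card (C - {B}) choose (k - 1)" using assms(1) by (simp add: n_subsets)
  finally show ?thesis using assms by simp
qed

lemma card_subsets_without:
  assumes "finite C" "B \<in> C"
  shows "card {T. T \<subseteq> C \<and> card T = k \<and> B \<notin> T} = (card C - 1) choose k"
proof -
  have "{T. T \<subseteq> C \<and> card T = k \<and> B \<notin> T} = {T. T \<subseteq> C - {B} \<and> card T = k}" by auto
  thus ?thesis using assms by (simp add: n_subsets)
qed

lemma card_subsets_with_without:
  assumes "finite C" "B \<in> C" "B' \<in> C" "B \<noteq> B'" "1 \<le> k"
  shows "card {T. T \<subseteq> C \<and> card T = k \<and> B \<in> T \<and> B' \<notin> T} = (card C - 2) choose (k - 1)"
proof -
  have e: "{T. T \<subseteq> C \<and> card T = k \<and> B \<in> T \<and> B' \<notin> T} = {T. T \<subseteq> C - {B'} \<and> card T = k \<and> B \<in> T}" by blast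
  have f: "finite (C - {B'})" "B \<in> C - {B'}" using assms by auto
  have c: "card (C - {B'}) - 1 = card C - 2" using assms(1,3) by (simp add: card_Diff_singleton)
  show ?thesis unfolding e card_subsets_with[OF f assms(5)] c ..
qed



lemma cluster_of_unique:
  assumes P: "partition_on {0..<N} C" and "B \<in> C" "i \<in> B"
  shows "cluster_of C i = B"
proof -
  have "\<And>B'. B' \<in> C \<and> i \<in> B' \<Longrightarrow> B' = B"
  proof -
    fix B' assume "B' \<in> C \<and> i \<in> B'"
    moreover have "B' \<noteq> B \<Longrightarrow> B' \<inter> B = {}" using disjointD[OF partition_onD2[OF P]] calculation assms(2) by simp
    ultimately show "B' = B" using assms(3) by blast
  qed
  hence "(THE B'. B' \<in> C \<and> i \<in> B') = B" using assms(2,3) by (intro the_equality) blast+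
  thus ?thesis unfolding cluster_of_def .
qed

lemma cluster_of_mem:
  assumes P: "partition_on {0..<N} C" and "i < N"
  shows "cluster_of C i \<in> C" "i \<in> cluster_of C i"
proof -
  have "i \<in> \<Union>C" using partition_onD1[OF P] assms(2) by auto
  then obtain B where "B \<in> C" "i \<in> B" by blast
  thus "cluster_of C i \<in> C" "i \<in> cluster_of C i" using cluster_of_unique[OF P] by auto
qed

lemma cluster_sub:
  assumes P: "partition_on {0..<N} C" and "B \<in> C"
  shows "B \<subseteq> {0..<N}"
  using partition_onD1[OF P] assms(2) by auto

lemma in_Union_T:
  assumes P: "partition_on {0..<N} C" and "T \<subseteq> C" "i < N"
  shows "(i \<in> \<Union>T) = (cluster_of C i \<in> T)"
proof
  assume "i \<in> \<Union>T"
  then obtain B where "B \<in> T" "i \<in> B" by blast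
  thus "cluster_of C i \<in> T" using cluster_of_unique[OF P, of B i] assms(2) by auto
next
  assume "cluster_of C i \<in> T" thus "i \<in> \<Union>T" using cluster_of_mem(2)[OF P assms(3)] by blast
qed

lemma same_cluster:
  assumes P: "partition_on {0..<N} C" and "i < N" "j < N"
  shows "(j \<in> cluster_of C i) = (cluster_of C j = cluster_of C i)"
proof
  assume "j \<in> cluster_of C i"
  thus "cluster_of C j = cluster_of C i" using cluster_of_unique[OF P cluster_of_mem(1)[OF P assms(2)]] by simp
next
  assume "cluster_of C j = cluster_of C i"
  thus "j \<in> cluster_of C i" using cluster_of_mem(2)[OF P assms(3)] by simp
qed



definition amat :: "(nat \<Rightarrow> nat \<Rightarrow> real) \<Rightarrow> nat \<Rightarrow> nat \<Rightarrow> nat \<Rightarrow> nat \<Rightarrow> real" where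
  "amat w N M i j = (\<Sum>s<M. (w i s / (\<Sum>s'<M. w i s')) * (w j s / (\<Sum>k<N. w k s)))"

lemma H_amat: "H w N M C = (\<Sum>i<N. \<Sum>j\<in>{0..<N} - cluster_of C i. amat w N M i j)"
  unfolding H_def amat_def ..

lemma exposure_eq: "exposure w N M Z i = (\<Sum>j<N. amat w N M i j * Z j)"
proof -
  have "exposure w N M Z i = (\<Sum>s<M. \<Sum>j<N. (w i s / (\<Sum>s'<M. w i s')) * (w j s / (\<Sum>k<N. w k s)) * Z j)"
    unfolding exposure_def dose_def sum_divide_distrib
    by (rule sum.cong, simp, simp add: sum_distrib_left sum_divide_distrib algebra_simps)
  also have "\<dots> = (\<Sum>j<N. \<Sum>s<M. (w i s / (\<Sum>s'<M. w i s')) * (w j s / (\<Sum>k<N. w k s)) * Z j)"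
    by (rule sum.swap)
  also have "\<dots> = (\<Sum>j<N. amat w N M i j * Z j)"
    unfolding amat_def by (simp add: sum_distrib_right)
  finally show ?thesis .
qed

lemma amat_sum:
  assumes "(\<Sum>s<M. w i s) > 0" "\<forall>s<M. (\<Sum>k<N. w k s) > 0"
  shows "(\<Sum>j<N. amat w N M i j) = 1"
proof -
  have "(\<Sum>j<N. amat w N M i j) = (\<Sum>s<M. (w i s / (\<Sum>s'<M. w i s')) * (\<Sum>j<N. w j s / (\<Sum>k<N. w k s)))"
    unfolding amat_def by (subst sum.swap) (simp add: sum_distrib_left)
  also have "\<dots> = (\<Sum>s<M. w i s / (\<Sum>s'<M. w i s'))"
  proof (rule sum.cong)
    fix s assume "s \<in> {..<M}"
    hence "(\<Sum>k<N. w k s) > 0" using assms(2) by auto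
    hence "(\<Sum>j<N. w j s / (\<Sum>k<N. w k s)) = 1" by (simp add: sum_divide_distrib[symmetric])
    thus "w i s / (\<Sum>s'<M. w i s') * (\<Sum>j<N. w j s / (\<Sum>k<N. w k s)) = w i s / (\<Sum>s'<M. w i s')" by simp
  qed simp
  also have "\<dots> = 1" using assms(1) by (simp add: sum_divide_distrib[symmetric])
  finally show ?thesis .
qed

lemma amat_nonneg:
  assumes "\<forall>i<N. \<forall>s<M. 0 \<le> w i s" "i < N" "j < N"
  shows "0 \<le> amat w N M i j"
  unfolding amat_def using assms
  by (intro sum_nonneg mult_nonneg_nonneg divide_nonneg_nonneg sum_nonneg) auto

lemma one_minus_exposure:
  assumes "(\<Sum>j<N. amat w N M i j) = 1"
  shows "1 - exposure w N M Z i = (\<Sum>j<N. amat w N M i j * (1 - Z j))"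
  using assms by (simp add: exposure_eq right_diff_distrib sum_subtractf)

lemma one_plus_exposure:
  assumes "(\<Sum>j<N. amat w N M i j) = 1"
  shows "1 + exposure w N M Z i = (\<Sum>j<N. amat w N M i j * (1 + Z j))"
  using assms by (simp add: exposure_eq distrib_left sum.distrib)



definition Sw :: "nat set set \<Rightarrow> nat \<Rightarrow> nat set \<Rightarrow> nat set set set" where
  "Sw C KT B = {T. T \<subseteq> C \<and> card T = KT \<and> B \<in> T}"
definition So :: "nat set set \<Rightarrow> nat \<Rightarrow> nat set \<Rightarrow> nat set set set" where
  "So C KT B = {T. T \<subseteq> C \<and> card T = KT \<and> B \<notin> T}"

context
  fixes w :: "nat \<Rightarrow> nat \<Rightarrow> real" and N M K KT :: nat and C :: "nat set set"
  assumes P: "partition_on {0..<N} C" and cardC: "card C = K"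
    and K2: "2 \<le> K" and KT0: "0 < KT" and KTK: "KT < K"
    and wnn: "\<forall>i<N. \<forall>s<M. 0 \<le> w i s"
    and Wpos: "\<forall>i<N. (\<Sum>s<M. w i s) > 0"
    and Vpos: "\<forall>s<M. (\<Sum>i<N. w i s) > 0"
    and N0: "0 < N"
begin

lemma finC: "finite C" using cardC K2 card.infinite by fastforce

lemma assign_pm: "assign T j \<in> {-1, 1}" unfolding assign_def by auto

lemma assign_c: "T \<subseteq> C \<Longrightarrow> j < N \<Longrightarrow> assign T j = (if cluster_of C j \<in> T then 1 else -1)"
  unfolding assign_def using in_Union_T[OF P] by simp

lemma card_Sw: "i < N \<Longrightarrow> card (Sw C KT (cluster_of C i)) = (K - 1) choose (KT - 1)"
  unfolding Sw_def using card_subsets_with[OF finC cluster_of_mem(1)[OF P], of i KT] KT0 cardC by simp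

lemma card_So: "i < N \<Longrightarrow> card (So C KT (cluster_of C i)) = (K - 1) choose KT"
  unfolding So_def using card_subsets_without[OF finC cluster_of_mem(1)[OF P], of i KT] cardC by simp

lemma finite_Sw: "finite (Sw C KT B)"
  unfolding Sw_def by (rule finite_subset[of _ "Pow C"]) (use finC in auto)
lemma finite_So: "finite (So C KT B)"
  unfolding So_def by (rule finite_subset[of _ "Pow C"]) (use finC in auto)

lemma count_Sw:
  assumes "i < N" "j < N" "j \<notin> cluster_of C i"
  shows "card {T \<in> Sw C KT (cluster_of C i). cluster_of C j \<notin> T} = (K - 2) choose (KT - 1)"
proof -
  have ne: "cluster_of C i \<noteq> cluster_of C j" using same_cluster[OF P assms(1,2)] assms(3) by simp
  have "{T \<in> Sw C KT (cluster_of C i). cluster_of C j \<notin> T}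
      = {T. T \<subseteq> C \<and> card T = KT \<and> cluster_of C i \<in> T \<and> cluster_of C j \<notin> T}"
    unfolding Sw_def by blast
  thus ?thesis using card_subsets_with_without[OF finC cluster_of_mem(1)[OF P assms(1)] cluster_of_mem(1)[OF P assms(2)] ne, of KT]
    KT0 cardC by simp
qed

lemma count_So:
  assumes "i < N" "j < N" "j \<notin> cluster_of C i"
  shows "card {T \<in> So C KT (cluster_of C i). cluster_of C j \<in> T} = (K - 2) choose (KT - 1)"
proof -
  have ne: "cluster_of C j \<noteq> cluster_of C i" using same_cluster[OF P assms(1,2)] assms(3) by simp
  have "{T \<in> So C KT (cluster_of C i). cluster_of C j \<in> T}
      = {T. T \<subseteq> C \<and> card T = KT \<and> cluster_of C j \<in> T \<and> cluster_of C i \<notin> T}"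
    unfolding So_def by blast
  thus ?thesis using card_subsets_with_without[OF finC cluster_of_mem(1)[OF P assms(2)] cluster_of_mem(1)[OF P assms(1)] ne, of KT]
    KT0 cardC by simp
qed

lemma amat_sum1: "i < N \<Longrightarrow> (\<Sum>j<N. amat w N M i j) = 1"
  using amat_sum[where w=w and i=i and N=N and M=M] Wpos Vpos by simp

lemma sum_outside:
  "(\<Sum>j<N. amat w N M i j * (if j \<in> B then 0 else c)) = c * (\<Sum>j\<in>{0..<N} - B. amat w N M i j)"
proof -
  have "(\<Sum>j<N. amat w N M i j * (if j \<in> B then 0 else c)) = (\<Sum>j\<in>{0..<N}. if j \<in> B then 0 else c * amat w N M i j)"
    by (rule sum.cong) (auto simp: lessThan_atLeast0)
  also have "\<dots> = (\<Sum>j\<in>{0..<N} - B. c * amat w N M i j)"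
    by (simp add: sum.If_cases Diff_eq)
  finally show ?thesis by (simp add: sum_distrib_left)
qed

lemma F1:
  assumes i: "i < N"
  shows "(\<Sum>T\<in>Sw C KT (cluster_of C i). 1 - exposure w N M (assign T) i)
       = 2 * real ((K - 2) choose (KT - 1)) * (\<Sum>j\<in>{0..<N} - cluster_of C i. amat w N M i j)"
proof -
  let ?S = "Sw C KT (cluster_of C i)"
  have "(\<Sum>T\<in>?S. 1 - exposure w N M (assign T) i) = (\<Sum>T\<in>?S. \<Sum>j<N. amat w N M i j * (1 - assign T j))"
    using one_minus_exposure[OF amat_sum1[OF i]] by simp
  also have "\<dots> = (\<Sum>j<N. amat w N M i j * (\<Sum>T\<in>?S. 1 - assign T j))"
    by (subst sum.swap) (simp add: sum_distrib_left)
  also have "\<dots> = (\<Sum>j<N. amat w N M i j * (if j \<in> cluster_of C i then 0 else 2 * real ((K - 2) choose (KT - 1))))"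
  proof (rule sum.cong[OF refl])
    fix j assume "j \<in> {..<N}" hence j: "j < N" by simp
    show "amat w N M i j * (\<Sum>T\<in>?S. 1 - assign T j) = amat w N M i j * (if j \<in> cluster_of C i then 0 else 2 * real ((K - 2) choose (KT - 1)))"
    proof (cases "j \<in> cluster_of C i")
      case True
      hence cj: "cluster_of C j = cluster_of C i" using same_cluster[OF P i j] by simp
      have "\<And>T. T \<in> ?S \<Longrightarrow> 1 - assign T j = 0" using assign_c[OF _ j] cj unfolding Sw_def by auto
      thus ?thesis using True by simp
    next
      case False
      have "(\<Sum>T\<in>?S. 1 - assign T j) = (\<Sum>T\<in>?S. if cluster_of C j \<notin> T then 2 else 0)"
        by (rule sum.cong[OF refl]) (auto simp: Sw_def assign_c[OF _ j])
      also have "\<dots> = 2 * real (card {T \<in> ?S. cluster_of C j \<notin> T})"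
        by (simp add: sum.If_cases finite_Sw Int_def)
      also have "\<dots> = 2 * real ((K - 2) choose (KT - 1))" using count_Sw[OF i j False] by simp
      finally show ?thesis using False by simp
    qed
  qed
  also have "\<dots> = 2 * real ((K - 2) choose (KT - 1)) * (\<Sum>j\<in>{0..<N} - cluster_of C i. amat w N M i j)"
    by (rule sum_outside)
  finally show ?thesis .
qed

lemma F0:
  assumes i: "i < N"
  shows "(\<Sum>T\<in>So C KT (cluster_of C i). 1 + exposure w N M (assign T) i)
       = 2 * real ((K - 2) choose (KT - 1)) * (\<Sum>j\<in>{0..<N} - cluster_of C i. amat w N M i j)"
proof -
  let ?S = "So C KT (cluster_of C i)"
  have "(\<Sum>T\<in>?S. 1 + exposure w N M (assign T) i) = (\<Sum>T\<in>?S. \<Sum>j<N. amat w N M i j * (1 + assign T j))"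
    using one_plus_exposure[OF amat_sum1[OF i]] by simp
  also have "\<dots> = (\<Sum>j<N. amat w N M i j * (\<Sum>T\<in>?S. 1 + assign T j))"
    by (subst sum.swap) (simp add: sum_distrib_left)
  also have "\<dots> = (\<Sum>j<N. amat w N M i j * (if j \<in> cluster_of C i then 0 else 2 * real ((K - 2) choose (KT - 1))))"
  proof (rule sum.cong[OF refl])
    fix j assume "j \<in> {..<N}" hence j: "j < N" by simp
    show "amat w N M i j * (\<Sum>T\<in>?S. 1 + assign T j) = amat w N M i j * (if j \<in> cluster_of C i then 0 else 2 * real ((K - 2) choose (KT - 1)))"
    proof (cases "j \<in> cluster_of C i")
      case True
      hence cj: "cluster_of C j = cluster_of C i" using same_cluster[OF P i j] by simp
      have "\<And>T. T \<in> ?S \<Longrightarrow> 1 + assign T j = 0" using assign_c[OF _ j] cj unfolding So_def by auto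
      thus ?thesis using True by simp
    next
      case False
      have "(\<Sum>T\<in>?S. 1 + assign T j) = (\<Sum>T\<in>?S. if cluster_of C j \<in> T then 2 else 0)"
        by (rule sum.cong[OF refl]) (auto simp: So_def assign_c[OF _ j])
      also have "\<dots> = 2 * real (card {T \<in> ?S. cluster_of C j \<in> T})"
        by (simp add: sum.If_cases finite_So Int_def)
      also have "\<dots> = 2 * real ((K - 2) choose (KT - 1))" using count_So[OF i j False] by simp
      finally show ?thesis using False by simp
    qed
  qed
  also have "\<dots> = 2 * real ((K - 2) choose (KT - 1)) * (\<Sum>j\<in>{0..<N} - cluster_of C i. amat w N M i j)"
    by (rule sum_outside)
  finally show ?thesis .
qed

lemma NT_pos: "real N * real KT / real K > 0" using N0 KT0 K2 by simp
lemma NC_eq: "real N - real N * real KT / real K = real N * real (K - KT) / real K"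
  using K2 KTK by (simp add: of_nat_diff field_simps)
lemma NC_pos: "real N - real N * real KT / real K > 0" unfolding NC_eq using N0 KTK by simp

lemma n1_pos: "real ((K - 1) choose (KT - 1)) > 0" using KTK by simp
lemma n0_pos: "real ((K - 1) choose KT) > 0" using KTK by simp

lemma nNT: "real (K choose KT) * (real N * real KT / real K) = real N * real ((K - 1) choose (KT - 1))"
proof -
  have "KT * (K choose KT) = K * ((K - 1) choose (KT - 1))" using times_binomial_minus1_eq[OF KT0] .
  hence "real KT * real (K choose KT) = real K * real ((K - 1) choose (KT - 1))" by (metis of_nat_mult)
  thus ?thesis using K2 by (simp add: field_simps)
qed

lemma nNC: "real (K choose KT) * (real N - real N * real KT / real K) = real N * real ((K - 1) choose KT)"
proof -
  have "(K - KT) * (K choose KT) = K * ((K - 1) choose KT)" using binomial_absorb_comp .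
  hence "real (K - KT) * real (K choose KT) = real K * real ((K - 1) choose KT)" by (metis of_nat_mult)
  thus ?thesis unfolding NC_eq using K2 by (simp add: field_simps)
qed

lemma ratio: "real ((K - 2) choose (KT - 1)) / real ((K - 1) choose (KT - 1))
   + real ((K - 2) choose (KT - 1)) / real ((K - 1) choose KT) = real K / (real K - 1)"
proof -
  have a: "(K - 1 - (KT - 1)) * ((K - 1) choose (KT - 1)) = (K - 1) * ((K - 1 - 1) choose (KT - 1))"
    by (rule binomial_absorb_comp)
  have a': "real (K - KT) * real ((K - 1) choose (KT - 1)) = (real K - 1) * real ((K - 2) choose (KT - 1))"
  proof -
    have "K - 1 - (KT - 1) = K - KT" "K - 1 - 1 = K - 2" using KT0 by auto
    hence "(K - KT) * ((K - 1) choose (KT - 1)) = (K - 1) * ((K - 2) choose (KT - 1))" using a by simp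
    hence "real (K - KT) * real ((K - 1) choose (KT - 1)) = real (K - 1) * real ((K - 2) choose (KT - 1))"
      by (metis of_nat_mult)
    moreover have "real (K - 1) = real K - 1" using K2 by simp
    ultimately show ?thesis by simp
  qed
  have b: "KT * ((K - 1) choose KT) = (K - 1) * ((K - 1 - 1) choose (KT - 1))"
    by (rule times_binomial_minus1_eq[OF KT0])
  have b': "real KT * real ((K - 1) choose KT) = (real K - 1) * real ((K - 2) choose (KT - 1))"
  proof -
    have "K - 1 - 1 = K - 2" by auto
    hence "KT * ((K - 1) choose KT) = (K - 1) * ((K - 2) choose (KT - 1))" using b by simp
    hence "real KT * real ((K - 1) choose KT) = real (K - 1) * real ((K - 2) choose (KT - 1))"
      by (metis of_nat_mult)
    moreover have "real (K - 1) = real K - 1" using K2 by simp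
    ultimately show ?thesis by simp
  qed
  have K1: "real K - 1 > 0" using K2 by simp
  have "real ((K - 2) choose (KT - 1)) / real ((K - 1) choose (KT - 1)) = real (K - KT) / (real K - 1)"
  proof -
    have "real ((K - 2) choose (KT - 1)) / real ((K - 1) choose (KT - 1)) = real (K - KT) / (real K - 1)
      \<longleftrightarrow> real ((K - 2) choose (KT - 1)) * (real K - 1) = real (K - KT) * real ((K - 1) choose (KT - 1))"
      by (rule frac_eq_eq) (use n1_pos K1 in auto)
    thus ?thesis using a' by (metis mult.commute)
  qed
  moreover have "real ((K - 2) choose (KT - 1)) / real ((K - 1) choose KT) = real KT / (real K - 1)"
  proof -
    have "real ((K - 2) choose (KT - 1)) / real ((K - 1) choose KT) = real KT / (real K - 1)
      \<longleftrightarrow> real ((K - 2) choose (KT - 1)) * (real K - 1) = real KT * real ((K - 1) choose KT)"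
      by (rule frac_eq_eq) (use n0_pos K1 in auto)
    thus ?thesis using b' by (metis mult.commute)
  qed
  moreover have "real (K - KT) = real K - real KT" using KTK by simp
  ultimately show ?thesis using K1 by (simp add: add_divide_distrib[symmetric])
qed

lemma dim_T:
  assumes T: "T \<subseteq> C"
  shows "dim_est N K KT (assign T) (outcomes w N M g (assign T)) =
    (\<Sum>i<N. if cluster_of C i \<in> T then g i 1 (exposure w N M (assign T) i) else 0) / (real N * real KT / real K)
  - (\<Sum>i<N. if cluster_of C i \<in> T then 0 else g i (-1) (exposure w N M (assign T) i)) / (real N - real N * real KT / real K)"
proof -
  have s1: "{i. i < N \<and> assign T i = 1} = {i \<in> {..<N}. cluster_of C i \<in> T}"
    using assign_c[OF T] by (auto split: if_splits)
  have s0: "{i. i < N \<and> assign T i = -1} = {i \<in> {..<N}. cluster_of C i \<notin> T}"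
    using assign_c[OF T] by (auto split: if_splits)
  have e1: "(\<Sum>i\<in>{i. i < N \<and> assign T i = 1}. outcomes w N M g (assign T) i)
      = (\<Sum>i<N. if cluster_of C i \<in> T then g i 1 (exposure w N M (assign T) i) else 0)"
    unfolding s1 sum.inter_filter[OF finite_lessThan]
    by (rule sum.cong[OF refl]) (simp add: outcomes_def assign_c[OF T])
  have e0: "(\<Sum>i\<in>{i. i < N \<and> assign T i = -1}. outcomes w N M g (assign T) i)
      = (\<Sum>i<N. if cluster_of C i \<in> T then 0 else g i (-1) (exposure w N M (assign T) i))"
    unfolding s0 sum.inter_filter[OF finite_lessThan]
    by (rule sum.cong[OF refl]) (simp add: outcomes_def assign_c[OF T])
  show ?thesis unfolding dim_est_def Let_def e1 e0 ..
qed


lemma expect_formula: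
  "expected_dim w N M K KT C g - tau_star N g =
   (1 / real N) * (\<Sum>i<N. (\<Sum>T\<in>Sw C KT (cluster_of C i). g i 1 (exposure w N M (assign T) i) - g i 1 1) / real ((K - 1) choose (KT - 1))
      - (\<Sum>T\<in>So C KT (cluster_of C i). g i (-1) (exposure w N M (assign T) i) - g i (-1) (-1)) / real ((K - 1) choose KT))"
proof -
  define S where "S = {T. T \<subseteq> C \<and> card T = KT}"
  define NT where "NT = real N * real KT / real K"
  define NC where "NC = real N - real N * real KT / real K"
  define n1 where "n1 = real ((K - 1) choose (KT - 1))"
  define n0 where "n0 = real ((K - 1) choose KT)"
  define n where "n = real (K choose KT)"
  define e where "e T i = exposure w N M (assign T) i" for T i
  define A1 where "A1 = (\<Sum>i<N. \<Sum>T\<in>Sw C KT (cluster_of C i). g i 1 (e T i) - g i 1 1)"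
  define A0 where "A0 = (\<Sum>i<N. \<Sum>T\<in>So C KT (cluster_of C i). g i (-1) (e T i) - g i (-1) (-1))"
  define G1 where "G1 = (\<Sum>i<N. g i 1 1)"
  define G0 where "G0 = (\<Sum>i<N. g i (-1) (-1))"
  have finS: "finite S" unfolding S_def by (rule finite_subset[of _ "Pow C"]) (use finC in auto)
  have cardS: "real (card S) = n" unfolding S_def n_def using n_subsets[OF finC, of KT] cardC by simp
  have X1: "(\<Sum>T\<in>S. \<Sum>i<N. if cluster_of C i \<in> T then g i 1 (e T i) else 0) = A1 + n1 * G1"
  proof -
    have "(\<Sum>T\<in>S. \<Sum>i<N. if cluster_of C i \<in> T then g i 1 (e T i) else 0)
        = (\<Sum>i<N. \<Sum>T\<in>S. if cluster_of C i \<in> T then g i 1 (e T i) else 0)" by (rule sum.swap)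
    also have "\<dots> = (\<Sum>i<N. \<Sum>T\<in>Sw C KT (cluster_of C i). g i 1 (e T i))"
    proof (rule sum.cong[OF refl])
      fix i assume "i \<in> {..<N}"
      have "Sw C KT (cluster_of C i) = {T\<in>S. cluster_of C i \<in> T}" unfolding Sw_def S_def by auto
      thus "(\<Sum>T\<in>S. if cluster_of C i \<in> T then g i 1 (e T i) else 0) = (\<Sum>T\<in>Sw C KT (cluster_of C i). g i 1 (e T i))"
        by (simp add: sum.inter_filter[OF finS])
    qed
    also have "\<dots> = (\<Sum>i<N. (\<Sum>T\<in>Sw C KT (cluster_of C i). g i 1 (e T i) - g i 1 1) + n1 * g i 1 1)"
    proof (rule sum.cong[OF refl])
      fix i assume "i \<in> {..<N}" hence "i < N" by simp
      thus "(\<Sum>T\<in>Sw C KT (cluster_of C i). g i 1 (e T i)) = (\<Sum>T\<in>Sw C KT (cluster_of C i). g i 1 (e T i) - g i 1 1) + n1 * g i 1 1"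
        by (simp add: sum_subtractf card_Sw n1_def)
    qed
    also have "\<dots> = A1 + n1 * G1" unfolding A1_def G1_def by (simp add: sum.distrib sum_distrib_left)
    finally show ?thesis .
  qed
  have X0: "(\<Sum>T\<in>S. \<Sum>i<N. if cluster_of C i \<in> T then 0 else g i (-1) (e T i)) = A0 + n0 * G0"
  proof -
    have "(\<Sum>T\<in>S. \<Sum>i<N. if cluster_of C i \<in> T then 0 else g i (-1) (e T i))
        = (\<Sum>i<N. \<Sum>T\<in>S. if cluster_of C i \<notin> T then g i (-1) (e T i) else 0)"
      by (subst sum.swap) (rule sum.cong[OF refl], rule sum.cong[OF refl], simp)
    also have "\<dots> = (\<Sum>i<N. \<Sum>T\<in>So C KT (cluster_of C i). g i (-1) (e T i))"
    proof (rule sum.cong[OF refl])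
      fix i assume "i \<in> {..<N}"
      have "So C KT (cluster_of C i) = {T\<in>S. cluster_of C i \<notin> T}" unfolding So_def S_def by auto
      thus "(\<Sum>T\<in>S. if cluster_of C i \<notin> T then g i (-1) (e T i) else 0) = (\<Sum>T\<in>So C KT (cluster_of C i). g i (-1) (e T i))"
        by (simp add: sum.inter_filter[OF finS])
    qed
    also have "\<dots> = (\<Sum>i<N. (\<Sum>T\<in>So C KT (cluster_of C i). g i (-1) (e T i) - g i (-1) (-1)) + n0 * g i (-1) (-1))"
    proof (rule sum.cong[OF refl])
      fix i assume "i \<in> {..<N}" hence "i < N" by simp
      thus "(\<Sum>T\<in>So C KT (cluster_of C i). g i (-1) (e T i)) = (\<Sum>T\<in>So C KT (cluster_of C i). g i (-1) (e T i) - g i (-1) (-1)) + n0 * g i (-1) (-1)"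
        by (simp add: sum_subtractf card_So n0_def)
    qed
    also have "\<dots> = A0 + n0 * G0" unfolding A0_def G0_def by (simp add: sum.distrib sum_distrib_left)
    finally show ?thesis .
  qed
  have sumdim: "(\<Sum>T\<in>S. dim_est N K KT (assign T) (outcomes w N M g (assign T)))
     = (\<Sum>T\<in>S. (\<Sum>i<N. if cluster_of C i \<in> T then g i 1 (e T i) else 0) / NT
                - (\<Sum>i<N. if cluster_of C i \<in> T then 0 else g i (-1) (e T i)) / NC)"
    unfolding e_def NT_def NC_def by (rule sum.cong[OF refl]) (rule dim_T, simp add: S_def)
  also have "\<dots> = (A1 + n1 * G1) / NT - (A0 + n0 * G0) / NC"
    by (simp add: sum_subtractf sum_divide_distrib[symmetric] X1 X0)
  finally have E: "expected_dim w N M K KT C g = ((A1 + n1 * G1) / NT - (A0 + n0 * G0) / NC) / n"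
    unfolding expected_dim_def S_def[symmetric] cardS by simp
  have tau: "tau_star N g = (G1 - G0) / real N"
    unfolding tau_star_def G1_def G0_def by (simp add: sum_subtractf)
  have rhs: "(\<Sum>i<N. (\<Sum>T\<in>Sw C KT (cluster_of C i). g i 1 (exposure w N M (assign T) i) - g i 1 1) / n1
      - (\<Sum>T\<in>So C KT (cluster_of C i). g i (-1) (exposure w N M (assign T) i) - g i (-1) (-1)) / n0)
      = A1 / n1 - A0 / n0"
    unfolding A1_def A0_def e_def sum_divide_distrib by (rule sum_subtractf)
  have pos: "n1 > 0" "n0 > 0" "real N > 0" "n > 0" using n1_pos n0_pos N0 KTK unfolding n1_def n0_def n_def by auto
  have NTe: "NT = real N * n1 / n" using nNT pos unfolding NT_def n1_def n_def by (simp add: field_simps)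
  have NCe: "NC = real N * n0 / n" using nNC pos unfolding NC_def n0_def n_def by (simp add: field_simps)
  show ?thesis unfolding E tau n1_def[symmetric] n0_def[symmetric] rhs NTe NCe
    using pos by (simp add: field_simps)
qed


lemma exposure_range:
  assumes i: "i < N"
  shows "exposure w N M (assign T) i \<in> {-1..1}"
proof -
  have "0 \<le> (\<Sum>j<N. amat w N M i j * (1 - assign T j))"
    by (rule sum_nonneg) (use amat_nonneg[OF wnn i] in \<open>auto simp: assign_def intro!: mult_nonneg_nonneg\<close>)
  moreover have "0 \<le> (\<Sum>j<N. amat w N M i j * (1 + assign T j))"
    by (rule sum_nonneg) (use amat_nonneg[OF wnn i] in \<open>auto simp: assign_def intro!: mult_nonneg_nonneg\<close>)
  ultimately show ?thesis
    using one_minus_exposure[OF amat_sum1[OF i], where Z="assign T"] one_plus_exposure[OF amat_sum1[OF i], where Z="assign T"] by simp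
qed

lemma h_nonneg: "0 \<le> (\<Sum>j\<in>{0..<N} - cluster_of C i. amat w N M i j)" if "i < N"
  by (rule sum_nonneg) (use amat_nonneg[OF wnn that] in auto)

lemma H_nonneg: "0 \<le> H w N M C"
  unfolding H_amat by (rule sum_nonneg) (use h_nonneg in auto)

lemma per_i_bound:
  assumes i: "i < N" and lip: "lip_family N L g"
  shows "\<bar>(\<Sum>T\<in>Sw C KT (cluster_of C i). g i 1 (exposure w N M (assign T) i) - g i 1 1) / real ((K - 1) choose (KT - 1))
      - (\<Sum>T\<in>So C KT (cluster_of C i). g i (-1) (exposure w N M (assign T) i) - g i (-1) (-1)) / real ((K - 1) choose KT)\<bar>
      \<le> 2 * L * (real K / (real K - 1)) * (\<Sum>j\<in>{0..<N} - cluster_of C i. amat w N M i j)"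
proof -
  define c2 where "c2 = real ((K - 2) choose (KT - 1))"
  define n1 where "n1 = real ((K - 1) choose (KT - 1))"
  define n0 where "n0 = real ((K - 1) choose KT)"
  define h where "h = (\<Sum>j\<in>{0..<N} - cluster_of C i. amat w N M i j)"
  define D1 where "D1 = (\<Sum>T\<in>Sw C KT (cluster_of C i). g i 1 (exposure w N M (assign T) i) - g i 1 1)"
  define D0 where "D0 = (\<Sum>T\<in>So C KT (cluster_of C i). g i (-1) (exposure w N M (assign T) i) - g i (-1) (-1))"
  have l1: "L-lipschitz_on {-1..1} (g i 1)" and l0: "L-lipschitz_on {-1..1} (g i (-1))"
    using lip i unfolding lip_family_def by auto
  have "\<bar>D1\<bar> \<le> (\<Sum>T\<in>Sw C KT (cluster_of C i). \<bar>g i 1 (exposure w N M (assign T) i) - g i 1 1\<bar>)"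
    unfolding D1_def by (rule sum_abs)
  also have "\<dots> \<le> (\<Sum>T\<in>Sw C KT (cluster_of C i). L * (1 - exposure w N M (assign T) i))"
  proof (rule sum_mono)
    fix T
    have r: "exposure w N M (assign T) i \<in> {-1..1}" by (rule exposure_range[OF i])
    have "dist (g i 1 (exposure w N M (assign T) i)) (g i 1 1) \<le> L * dist (exposure w N M (assign T) i) 1"
      by (rule lipschitz_onD[OF l1 r]) simp
    thus "\<bar>g i 1 (exposure w N M (assign T) i) - g i 1 1\<bar> \<le> L * (1 - exposure w N M (assign T) i)"
      using r by (simp add: dist_real_def)
  qed
  also have "\<dots> = L * (2 * c2 * h)" unfolding sum_distrib_left[symmetric] F1[OF i] c2_def h_def ..
  finally have b1: "\<bar>D1\<bar> \<le> L * (2 * c2 * h)" .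
  have "\<bar>D0\<bar> \<le> (\<Sum>T\<in>So C KT (cluster_of C i). \<bar>g i (-1) (exposure w N M (assign T) i) - g i (-1) (-1)\<bar>)"
    unfolding D0_def by (rule sum_abs)
  also have "\<dots> \<le> (\<Sum>T\<in>So C KT (cluster_of C i). L * (1 + exposure w N M (assign T) i))"
  proof (rule sum_mono)
    fix T
    have r: "exposure w N M (assign T) i \<in> {-1..1}" by (rule exposure_range[OF i])
    have "dist (g i (-1) (exposure w N M (assign T) i)) (g i (-1) (-1)) \<le> L * dist (exposure w N M (assign T) i) (-1)"
      by (rule lipschitz_onD[OF l0 r]) simp
    thus "\<bar>g i (-1) (exposure w N M (assign T) i) - g i (-1) (-1)\<bar> \<le> L * (1 + exposure w N M (assign T) i)"
      using r by (simp add: dist_real_def add.commute)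
  qed
  also have "\<dots> = L * (2 * c2 * h)" unfolding sum_distrib_left[symmetric] F0[OF i] c2_def h_def ..
  finally have b0: "\<bar>D0\<bar> \<le> L * (2 * c2 * h)" .
  have pos: "n1 > 0" "n0 > 0" using n1_pos n0_pos unfolding n1_def n0_def by auto
  have "\<bar>D1 / n1 - D0 / n0\<bar> \<le> \<bar>D1\<bar> / n1 + \<bar>D0\<bar> / n0"
    using abs_triangle_ineq4[of "D1 / n1" "D0 / n0"] pos by simp
  also have "\<dots> \<le> L * (2 * c2 * h) / n1 + L * (2 * c2 * h) / n0"
    by (intro add_mono divide_right_mono b1 b0) (use pos in auto)
  also have "\<dots> = 2 * L * h * (c2 / n1 + c2 / n0)" using pos by (simp add: field_simps)
  also have "\<dots> = 2 * L * (real K / (real K - 1)) * h" unfolding c2_def n1_def n0_def ratio by simp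
  finally show ?thesis unfolding D1_def D0_def n1_def n0_def h_def .
qed

lemma bias_bound:
  assumes lip: "lip_family N L g"
  shows "bias w N M K KT C g \<le> 2 / real N * (real K / (real K - 1)) * L * H w N M C"
proof -
  have "bias w N M K KT C g = (1 / real N) * \<bar>\<Sum>i<N. (\<Sum>T\<in>Sw C KT (cluster_of C i). g i 1 (exposure w N M (assign T) i) - g i 1 1) / real ((K - 1) choose (KT - 1))
      - (\<Sum>T\<in>So C KT (cluster_of C i). g i (-1) (exposure w N M (assign T) i) - g i (-1) (-1)) / real ((K - 1) choose KT)\<bar>"
    unfolding bias_def expect_formula using N0 by (simp add: abs_mult)
  also have "\<dots> \<le> (1 / real N) * (\<Sum>i<N. \<bar>(\<Sum>T\<in>Sw C KT (cluster_of C i). g i 1 (exposure w N M (assign T) i) - g i 1 1) / real ((K - 1) choose (KT - 1))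
      - (\<Sum>T\<in>So C KT (cluster_of C i). g i (-1) (exposure w N M (assign T) i) - g i (-1) (-1)) / real ((K - 1) choose KT)\<bar>)"
    by (intro mult_left_mono sum_abs) simp
  also have "\<dots> \<le> (1 / real N) * (\<Sum>i<N. 2 * L * (real K / (real K - 1)) * (\<Sum>j\<in>{0..<N} - cluster_of C i. amat w N M i j))"
    by (intro mult_left_mono sum_mono per_i_bound lip) auto
  also have "\<dots> = 2 / real N * (real K / (real K - 1)) * L * H w N M C"
    unfolding H_amat sum_distrib_left[symmetric] by simp
  finally show ?thesis .
qed

lemma lip_lin: "0 \<le> L \<Longrightarrow> lip_family N L (\<lambda>i z e. L * e)"
  unfolding lip_family_def
  by (auto intro!: lipschitz_onI simp: dist_real_def abs_mult right_diff_distrib[symmetric])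

lemma bias_lin:
  assumes L: "0 \<le> L"
  shows "bias w N M K KT C (\<lambda>i z e. L * e) = 2 / real N * (real K / (real K - 1)) * L * H w N M C"
proof -
  have pos: "real ((K - 1) choose (KT - 1)) > 0" "real ((K - 1) choose KT) > 0" using n1_pos n0_pos by auto
  have per: "(\<Sum>T\<in>Sw C KT (cluster_of C i). L * exposure w N M (assign T) i - L * 1) / real ((K - 1) choose (KT - 1))
      - (\<Sum>T\<in>So C KT (cluster_of C i). L * exposure w N M (assign T) i - L * (-1)) / real ((K - 1) choose KT)
      = - (2 * L * (real K / (real K - 1)) * (\<Sum>j\<in>{0..<N} - cluster_of C i. amat w N M i j))" if i: "i < N" for i
  proof -
    define c2 where "c2 = real ((K - 2) choose (KT - 1))"
    define h where "h = (\<Sum>j\<in>{0..<N} - cluster_of C i. amat w N M i j)"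
    have "(\<Sum>T\<in>Sw C KT (cluster_of C i). L * exposure w N M (assign T) i - L * 1)
        = - L * (\<Sum>T\<in>Sw C KT (cluster_of C i). 1 - exposure w N M (assign T) i)"
      by (simp add: sum_distrib_left algebra_simps sum_negf)
    also have "\<dots> = - L * (2 * c2 * h)" unfolding F1[OF i] c2_def h_def ..
    finally have d1: "(\<Sum>T\<in>Sw C KT (cluster_of C i). L * exposure w N M (assign T) i - L * 1) = - L * (2 * c2 * h)" .
    have "(\<Sum>T\<in>So C KT (cluster_of C i). L * exposure w N M (assign T) i - L * (-1))
        = L * (\<Sum>T\<in>So C KT (cluster_of C i). 1 + exposure w N M (assign T) i)"
      by (simp add: sum_distrib_left algebra_simps)
    also have "\<dots> = L * (2 * c2 * h)" unfolding F0[OF i] c2_def h_def ..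
    finally have d0: "(\<Sum>T\<in>So C KT (cluster_of C i). L * exposure w N M (assign T) i - L * (-1)) = L * (2 * c2 * h)" .
    have "- L * (2 * c2 * h) / real ((K - 1) choose (KT - 1)) - L * (2 * c2 * h) / real ((K - 1) choose KT)
        = - (2 * L * h * (c2 / real ((K - 1) choose (KT - 1)) + c2 / real ((K - 1) choose KT)))"
      using pos by (simp add: field_simps)
    also have "\<dots> = - (2 * L * (real K / (real K - 1)) * h)" unfolding c2_def ratio by simp
    finally show ?thesis unfolding d1 d0 h_def .
  qed
  have "expected_dim w N M K KT C (\<lambda>i z e. L * e) - tau_star N (\<lambda>i z e. L * e)
      = (1 / real N) * (\<Sum>i<N. - (2 * L * (real K / (real K - 1)) * (\<Sum>j\<in>{0..<N} - cluster_of C i. amat w N M i j)))"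
    unfolding expect_formula[of "\<lambda>i z e. L * e"]
    by (rule arg_cong[where f="\<lambda>x. 1 / real N * x"], rule sum.cong[OF refl], rule per, simp)
  also have "\<dots> = - (2 / real N * (real K / (real K - 1)) * L * H w N M C)"
    unfolding H_amat sum_negf sum_distrib_left[symmetric] by simp
  finally show ?thesis unfolding bias_def using H_nonneg L K2 N0 by simp
qed

end

theorem lemma3:
  fixes w :: "nat \<Rightarrow> nat \<Rightarrow> real" and N M K KT :: nat and L :: real
  assumes "0 < N" and "2 \<le> K" and "K dvd N" and "0 < KT" and "KT < K"
    and "\<forall>i<N. \<forall>s<M. 0 \<le> w i s"
    and "\<forall>i<N. (\<Sum>s<M. w i s) > 0"
    and "\<forall>s<M. (\<Sum>i<N. w i s) > 0"
    and "0 < L"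
  shows "(\<forall>C g. balanced_partition N K C \<and> lip_family N L g \<longrightarrow>
             bias w N M K KT C g \<le> 2 / real N * (real K / (real K - 1)) * L * H w N M C)
       \<and> (\<forall>C. balanced_partition N K C \<longrightarrow>
             lip_family N L (\<lambda>i z e. L * e) \<and>
             bias w N M K KT C (\<lambda>i z e. L * e) = 2 / real N * (real K / (real K - 1)) * L * H w N M C)
       \<and> {C. balanced_partition N K C \<and>
             (\<forall>C'. balanced_partition N K C' \<longrightarrow> worst_bias w N M K KT L C \<le> worst_bias w N M K KT L C')}
         = {C. balanced_partition N K C \<and>
             (\<forall>C'. balanced_partition N K C' \<longrightarrow> H w N M C \<le> H w N M C')}"
proof -
  have bnd: "bias w N M K KT C g \<le> 2 / real N * (real K / (real K - 1)) * L * H w N M C"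
    if b: "balanced_partition N K C" and lip: "lip_family N L g" for C g
  proof -
    have P: "partition_on {0..<N} C" and cC: "card C = K" using b unfolding balanced_partition_def by auto
    show ?thesis by (rule bias_bound[OF P cC assms(2,4,5,6,7,8,1) lip])
  qed
  have lin: "bias w N M K KT C (\<lambda>i z e. L * e) = 2 / real N * (real K / (real K - 1)) * L * H w N M C"
    if b: "balanced_partition N K C" for C
  proof -
    have P: "partition_on {0..<N} C" and cC: "card C = K" using b unfolding balanced_partition_def by auto
    show ?thesis by (rule bias_lin[OF P cC assms(2,4,5,6,7,8,1)]) (use assms(9) in simp)
  qed
  have liplin: "lip_family N L (\<lambda>i z e. L * e)" unfolding lip_family_def using assms(9)
    by (auto intro!: lipschitz_onI simp: dist_real_def abs_mult right_diff_distrib[symmetric])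
  have wb: "worst_bias w N M K KT L C = 2 / real N * (real K / (real K - 1)) * L * H w N M C"
    if b: "balanced_partition N K C" for C
    unfolding worst_bias_def
  proof (rule cSup_eq_maximum)
    show "2 / real N * (real K / (real K - 1)) * L * H w N M C \<in> bias w N M K KT C ` {g. lip_family N L g}"
      using lin[OF b] liplin by (metis (mono_tags, lifting) image_eqI mem_Collect_eq)
  next
    fix x assume "x \<in> bias w N M K KT C ` {g. lip_family N L g}"
    thus "x \<le> 2 / real N * (real K / (real K - 1)) * L * H w N M C" using bnd[OF b] by auto
  qed
  have cpos: "2 / real N * (real K / (real K - 1)) * L > 0" using assms(1,2,9) by simp
  have iff: "worst_bias w N M K KT L C \<le> worst_bias w N M K KT L C' \<longleftrightarrow> H w N M C \<le> H w N M C'"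
    if "balanced_partition N K C" "balanced_partition N K C'" for C C'
    unfolding wb[OF that(1)] wb[OF that(2)] using cpos by (rule mult_le_cancel_left_pos)
  show ?thesis
    using bnd lin liplin iff by blast
qed

end
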